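(* Let $L$ be a semiregular Lagrangian density. Then all multimomentum Hamiltonian forms associated with $L$ coincide on the Lagrangian constraint space $Q=\widehat L(J^1Y)$: $H|_Q=H'|_Q$. Moreover, the Poincaré–Cartan form of $L$ is the pullback $\Xi_L=\widehat L^*H$ of any associated multimomentum Hamiltonian form $H=p^\lambda_idy^i\wedge\omega_\lambda-\mathcal H\omega$ by the Legendre morphism; in coordinates, $\pi^\lambda_iy^i_\lambda-\mathcal L=\mathcal H(x^\mu,y^i,\pi^\lambda_i)$.
   Context: Let $\pi:Y\to X$ be a fibred manifold over an $n$-dimensional manifold $X$, fibred coordinates $(x^\lambda,y^i)$, $\omega=dx^1\wedge\dots\wedge dx^n$, $\omega_\lambda=\partial_\lambda\rfloor\omega$. $J^1Y$ has coordinates $(x^\lambda,y^i,y^i_\lambda)$. A Lagrangian density is $L=\mathcal L(x,y,y_\mu)\omega$, $\pi^\lambda_i=\partial\mathcal L/\partial y^i_\lambda$; its Poincaré–Cartan form is $\Xi_L=\pi^\lambda_idy^i\wedge\omega_\lambda+(\mathcal L-\pi^\lambda_iy^i_\lambda)\omega$. The Legendre bundle $\Pi=\wedge^nT^*X\otimes_YTX\otimes_YV^*Y\to Y$ has coordinates $(x^\lambda,y^i,p^\lambda_i)$, $\partial^i_\lambda=\partial/\partial p^\lambda_i$. The Legendre morphism $\widehat L:J^1Y\to\Pi$ is $p^\lambda_i\circ\widehat L=\pi^\lambda_i$, $Q=\widehat L(J^1Y)$. $L$ is semiregular if for every $q\in Q$ the preimage $\widehat L^{-1}(q)$ is a connected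 submanifold of $J^1Y$. A multimomentum Hamiltonian form is an $n$-form $H$ on $\Pi$, locally $p^\lambda_idy^i\wedge\omega_\lambda-\mathcal H\omega$, such that locally some jet field $\gamma=dx^\lambda\otimes(\partial_\lambda+\gamma^i_{(\lambda)}\partial_i+\gamma^\mu_{i\lambda}\partial^i_\mu)$ of $\Pi\to X$ satisfies $\gamma\rfloor(dp^\lambda_i\wedge dy^i\wedge\omega\otimes\partial_\lambda)=dH$; its momentum morphism is $y^i_\lambda\circ\widehat H=\partial^i_\lambda\mathcal H$. For a bundle morphism $\Phi:\Pi\to J^1Y$ over $Y$ put $H_\Phi=p^\lambda_idy^i\wedge\omega_\lambda-p^\lambda_i\Phi^i_\lambda\omega$. $H$ is associated with $L$ if $\widehat L\circ\widehat H|_Q=\mathrm{Id}_Q$ and $H=H_{\widehat H}+L\circ\widehat H$, where $L\circ\widehat H=\mathcal L(x,y,\partial^j_\lambda\mathcal H)\omega$. *)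

theory Defs
  imports "HOL-Analysis.Analysis"
begin

text \<open>Local fibred coordinates: x in R^n (index type 'n), y in R^m (index type 'm).
  A point of J^1Y is a triple (x, y, v) with v $ l $ i = y^i_l; a point of the Legendre
  bundle is a triple (x, y, p) with p $ l $ i = p^l_i.  The coordinate domain of Y is an
  open set U of pairs (x, y); the fibres of J^1Y and of Pi over Y are the whole of R^(nm).\<close>

type_synonym ('n, 'm) pt = "(real^'n) \<times> (real^'m) \<times> (real^'m^'n)"

coinductive smooth_fun :: "'a::euclidean_space set \<Rightarrow> ('a \<Rightarrow> real) \<Rightarrow> bool" for S where
  "\<lbrakk> \<forall>z\<in>S. f differentiable (at z);
     \<forall>b\<in>Basis. smooth_fun S (\<lambda>z. frechet_derivative f (at z) b) \<rbrakk> \<Longrightarrow> smooth_fun S f"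

definition submanifold :: "'a::euclidean_space set \<Rightarrow> bool" where
  "submanifold S \<longleftrightarrow>
     (\<forall>a\<in>S. \<exists>W (\<phi>::'a \<Rightarrow> 'a) \<psi> B. open W \<and> a \<in> W \<and> open (\<phi> ` W) \<and> B \<subseteq> Basis \<and>
        (\<forall>b\<in>Basis. smooth_fun W (\<lambda>z. \<phi> z \<bullet> b)) \<and>
        (\<forall>b\<in>Basis. smooth_fun (\<phi> ` W) (\<lambda>z. \<psi> z \<bullet> b)) \<and>
        (\<forall>z\<in>W. \<psi> (\<phi> z) = z) \<and>
        \<phi> ` (W \<inter> S) = \<phi> ` W \<inter> {z. \<forall>b\<in>B. z \<bullet> b = 0})"

definition jet_dir :: "'n::finite \<Rightarrow> 'm::finite \<Rightarrow> real^'m^'n" where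
  "jet_dir l i = (\<chi> \<mu> j. if \<mu> = l \<and> j = i then 1 else 0)"

text \<open>Derivatives with respect to the fibre coordinates y^i_l (resp. p^l_i):
  fibre_grad F x y w $ l $ i = dF/dw^l_i at (x,y,w).\<close>
definition fibre_grad :: "(('n::finite, 'm::finite) pt \<Rightarrow> real) \<Rightarrow> real^'n \<Rightarrow> real^'m \<Rightarrow> real^'m^'n \<Rightarrow> real^'m^'n" where
  "fibre_grad F x y w = (\<chi> l i. frechet_derivative F (at (x, y, w)) (0, 0, jet_dir l i))"

definition partial_y :: "(('n::finite, 'm::finite) pt \<Rightarrow> real) \<Rightarrow> real^'n \<Rightarrow> real^'m \<Rightarrow> real^'m^'n \<Rightarrow> 'm \<Rightarrow> real" where
  "partial_y F x y w i = frechet_derivative F (at (x, y, w)) (0, axis i 1, 0)"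

definition fdom :: "((real^'n) \<times> (real^'m)) set \<Rightarrow> ('n::finite, 'm::finite) pt set" where
  "fdom U = {(x, y, w). (x, y) \<in> U}"

definition legendre :: "(('n::finite, 'm::finite) pt \<Rightarrow> real) \<Rightarrow> ('n, 'm) pt \<Rightarrow> ('n, 'm) pt" where
  "legendre L z = (case z of (x, y, v) \<Rightarrow> (x, y, fibre_grad L x y v))"

definition momentum :: "(('n::finite, 'm::finite) pt \<Rightarrow> real) \<Rightarrow> ('n, 'm) pt \<Rightarrow> ('n, 'm) pt" where
  "momentum H z = (case z of (x, y, p) \<Rightarrow> (x, y, fibre_grad H x y p))"

definition pairing :: "real^'m^'n \<Rightarrow> real^'m^'n \<Rightarrow> real" where
  "pairing p v = (\<Sum>l\<in>UNIV. \<Sum>i\<in>UNIV. p $ l $ i * v $ l $ i)"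

text \<open>Lagrangian density L = \<L> omega on the coordinate domain.\<close>
definition lagrangian :: "((real^'n) \<times> (real^'m)) set \<Rightarrow> (('n::finite, 'm::finite) pt \<Rightarrow> real) \<Rightarrow> bool" where
  "lagrangian U L \<longleftrightarrow> open U \<and> smooth_fun (fdom U) L"

definition semiregular :: "((real^'n) \<times> (real^'m)) set \<Rightarrow> (('n::finite, 'm::finite) pt \<Rightarrow> real) \<Rightarrow> bool" where
  "semiregular U L \<longleftrightarrow>
     (\<forall>q \<in> legendre L ` fdom U.
        connected (fdom U \<inter> legendre L -` {q}) \<and> submanifold (fdom U \<inter> legendre L -` {q}))"

text \<open>Multimomentum Hamiltonian form H = p^l_i dy^i \<and> omega_l - \<H> omega, given by its
  Hamiltonian function \<H> on the coordinate domain of Pi: a jet field gamma of Pi \<rightarrow> X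
  with gamma \<rfloor> (dp \<and> dy \<and> omega \<otimes> \<partial>) = dH exists, i.e. there are smooth components
  gamma^i_(l) = \<partial>^i_l \<H> and gamma^mu_(i l) with sum_l gamma^l_(i l) = - \<partial>_i \<H>.\<close>
definition mm_hamiltonian :: "((real^'n) \<times> (real^'m)) set \<Rightarrow> (('n::finite, 'm::finite) pt \<Rightarrow> real) \<Rightarrow> bool" where
  "mm_hamiltonian U H \<longleftrightarrow> smooth_fun (fdom U) H \<and>
     (\<exists>(g1 :: ('n, 'm) pt \<Rightarrow> real^'m^'n) (g2 :: ('n, 'm) pt \<Rightarrow> 'n \<Rightarrow> 'm \<Rightarrow> 'n \<Rightarrow> real).
        (\<forall>l i. smooth_fun (fdom U) (\<lambda>z. g1 z $ l $ i)) \<and>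
        (\<forall>\<mu> i l. smooth_fun (fdom U) (\<lambda>z. g2 z \<mu> i l)) \<and>
        (\<forall>(x, y, p) \<in> fdom U. g1 (x, y, p) = fibre_grad H x y p \<and>
           (\<forall>i. (\<Sum>l\<in>UNIV. g2 (x, y, p) l i l) = - partial_y H x y p i)))"

text \<open>H is associated with L:  legendre o momentum = Id on Q, and
  H = H_{momentum} + L o momentum, i.e. \<H> = p^l_i \<partial>^i_l \<H> - \<L>(x, y, \<partial> \<H>).\<close>
definition associated :: "((real^'n) \<times> (real^'m)) set \<Rightarrow> (('n::finite, 'm::finite) pt \<Rightarrow> real) \<Rightarrow> (('n, 'm) pt \<Rightarrow> real) \<Rightarrow> bool" where
  "associated U H L \<longleftrightarrow>
     (\<forall>q \<in> legendre L ` fdom U. legendre L (momentum H q) = q) \<and>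
     (\<forall>(x, y, p) \<in> fdom U.
        H (x, y, p) = pairing p (fibre_grad H x y p) - L (x, y, fibre_grad H x y p))"

end

theory Submission
  imports Defs
begin

lemma jet_decomp: "(e::real^'m::finite^'n::finite) = (\<Sum>l\<in>UNIV. \<Sum>i\<in>UNIV. e$l$i *\<^sub>R jet_dir l i)"
proof -
  have "(\<Sum>l\<in>UNIV. \<Sum>i\<in>UNIV. e$l$i *\<^sub>R jet_dir l i) $ l0 $ i0 = e $ l0 $ i0" for l0 i0
  proof -
    have "(\<Sum>l\<in>UNIV. \<Sum>i\<in>UNIV. e$l$i *\<^sub>R jet_dir l i) $ l0 $ i0
        = (\<Sum>l\<in>UNIV. \<Sum>i\<in>UNIV. if l = l0 \<and> i = i0 then e$l$i else 0)"
      by (simp add: sum_component jet_dir_def) (smt (verit) mult_cancel_left1 mult_eq_0_iff sum.cong)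
    also have "\<dots> = e $ l0 $ i0"
    proof -
      have "(\<Sum>i\<in>UNIV. if l = l0 \<and> i = i0 then e$l$i else 0) = (if l = l0 then e$l$i0 else 0)" for l
        by (cases "l = l0") simp_all
      then show ?thesis by simp
    qed
    finally show ?thesis .
  qed
  then show ?thesis by (simp add: vec_eq_iff)
qed

lemma fibre_zero_deriv:
  fixes L :: "('n::finite, 'm::finite) pt \<Rightarrow> real"
  assumes dL: "L differentiable (at (x, y, u))" and P: "fibre_grad L x y u = P"
  shows "((\<lambda>u. pairing P u - L (x, y, u)) has_derivative (\<lambda>_. 0)) (at u)"
proof -
  define DL where "DL = frechet_derivative L (at (x, y, u))"
  have d1: "(L has_derivative DL) (at (x, y, u))"
    using dL DL_def frechet_derivative_works by blast
  have d2: "((\<lambda>u. (x, y, u)) has_derivative (\<lambda>e. (0, 0, e))) (at u)"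
    by (auto intro!: derivative_eq_intros)
  have d3: "((\<lambda>u. L (x, y, u)) has_derivative (\<lambda>e. DL (0, 0, e))) (at u)"
    using has_derivative_compose[OF d2 d1] by (simp add: o_def)
  have lp: "linear (pairing P)"
    unfolding pairing_def by (auto intro!: linearI simp: sum_distrib_left algebra_simps sum.distrib)
  have d4: "(pairing P has_derivative pairing P) (at u)"
    using lp by (simp add: linear_imp_has_derivative)
  have d5: "((\<lambda>u. pairing P u - L (x, y, u)) has_derivative (\<lambda>e. pairing P e - DL (0, 0, e))) (at u)"
    using has_derivative_diff[OF d4 d3] by simp
  have linK: "linear (\<lambda>e. DL (0, 0, e))"
    using has_derivative_linear[OF d3] .
  have "DL (0, 0, e) = pairing P e" for e
  proof -
    have "DL (0, 0, e) = DL (0, 0, \<Sum>l\<in>UNIV. \<Sum>i\<in>UNIV. e$l$i *\<^sub>R jet_dir l i)"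
      using jet_decomp[of e] by simp
    also have "\<dots> = (\<Sum>l\<in>UNIV. \<Sum>i\<in>UNIV. e$l$i * DL (0, 0, jet_dir l i))"
    proof -
      interpret K: linear "\<lambda>e. DL (0, 0, e)" by (rule linK)
      show ?thesis by (simp add: K.sum K.scale)
    qed
    also have "\<dots> = pairing P e"
      using P unfolding pairing_def fibre_grad_def DL_def[symmetric]
      by (auto simp: mult.commute intro!: sum.cong)
    finally show ?thesis .
  qed
  then show ?thesis using d5 by simp
qed


lemma smooth_diff: "smooth_fun S f \<Longrightarrow> z \<in> S \<Longrightarrow> f differentiable (at z)"
  by (erule smooth_fun.cases) auto

lemma smooth_vec_diff:
  assumes "\<forall>b\<in>Basis. smooth_fun W (\<lambda>z. (\<phi> z :: 'b::euclidean_space) \<bullet> b)" "z \<in> W"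
  shows "\<phi> differentiable (at z)"
  using assms smooth_diff differentiable_componentwise_within[of \<phi> z UNIV] by blast

lemma smooth_vec_cont:
  assumes "\<forall>b\<in>Basis. smooth_fun W (\<lambda>z. (\<phi> z :: 'b::euclidean_space) \<bullet> b)"
  shows "continuous_on W \<phi>"
  using smooth_vec_diff[OF assms] differentiable_imp_continuous_within
  by (metis continuous_at_imp_continuous_on)

lemma fibre_mem:
  assumes "z \<in> fdom U \<inter> legendre L -` {(x, y, P)}"
  shows "z = (x, y, snd (snd z)) \<and> fibre_grad L x y (snd (snd z)) = P \<and> z \<in> fdom U"
  using assms by (cases z) (auto simp: legendre_def)

lemma local_const:
  fixes L :: "('n::finite, 'm::finite) pt \<Rightarrow> real"
  assumes sm: "smooth_fun (fdom U) L"
    and Fdef: "F = fdom U \<inter> legendre L -` {(x, y, P)}"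
    and sub: "submanifold F" and aF: "a \<in> F"
  shows "\<exists>T. openin (top_of_set F) T \<and> a \<in> T \<and>
           (\<forall>s\<in>T. pairing P (snd (snd a)) - L a = pairing P (snd (snd s)) - L s)"
proof -
  define G where "G z = pairing P (snd (snd z)) - L z" for z
  define Gq where "Gq u = pairing P u - L (x, y, u)" for u
  have FG: "G z = Gq (snd (snd z))" if "z \<in> F" for z
  proof -
    have "z = (x, y, snd (snd z))" using fibre_mem[of z U L x y P] that Fdef by blast
    then obtain u where "z = (x, y, u)" by blast
    then show ?thesis unfolding G_def Gq_def by simp
  qed
  obtain W and \<phi> :: "('n, 'm) pt \<Rightarrow> ('n, 'm) pt" and \<psi> B where W: "open W" "a \<in> W" "open (\<phi> ` W)" "B \<subseteq> Basis"
    and s\<phi>: "\<forall>b\<in>Basis. smooth_fun W (\<lambda>z. \<phi> z \<bullet> b)"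
    and s\<psi>: "\<forall>b\<in>Basis. smooth_fun (\<phi> ` W) (\<lambda>z. \<psi> z \<bullet> b)"
    and inv: "\<forall>z\<in>W. \<psi> (\<phi> z) = z"
    and sl: "\<phi> ` (W \<inter> F) = \<phi> ` W \<inter> {z. \<forall>b\<in>B. z \<bullet> b = 0}"
    using bspec[OF sub[unfolded submanifold_def] aF] by (elim exE conjE) blast
  obtain r where r: "r > 0" "ball (\<phi> a) r \<subseteq> \<phi> ` W"
    using W(2,3) open_contains_ball by blast
  define C where "C = ball (\<phi> a) r \<inter> {z. \<forall>b\<in>B. z \<bullet> b = 0}"
  have cC: "convex C"
    unfolding C_def
    by (rule convex_Int[OF convex_ball]) (auto simp: convex_def inner_add_left)
  have \<psi>F: "\<psi> z \<in> F" if "z \<in> C" for z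
  proof -
    have "z \<in> \<phi> ` (W \<inter> F)" using that r sl C_def by auto
    then obtain s where "s \<in> W \<inter> F" "z = \<phi> s" by auto
    then show ?thesis using inv by auto
  qed
  define h where "h z = Gq (snd (snd (\<psi> z)))" for z
  have hd: "(h has_derivative (\<lambda>_. 0)) (at z within C)" if zC: "z \<in> C" for z
  proof -
    have "z \<in> \<phi> ` W" using zC r C_def by auto
    then have "\<psi> differentiable (at z)"
      by (rule smooth_vec_diff[OF s\<psi>])
    then obtain D where D: "(\<psi> has_derivative D) (at z within C)"
      using differentiable_def has_derivative_at_withinI by blast
    have D2: "((\<lambda>z. snd (snd (\<psi> z))) has_derivative (\<lambda>h. snd (snd (D h)))) (at z within C)"
      using D by (auto intro!: derivative_eq_intros)
    have mem: "\<psi> z = (x, y, snd (snd (\<psi> z)))" "fibre_grad L x y (snd (snd (\<psi> z))) = P" "\<psi> z \<in> fdom U"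
      using fibre_mem[of "\<psi> z" U L x y P] \<psi>F[OF zC] Fdef by auto
    have "L differentiable (at (x, y, snd (snd (\<psi> z))))"
      using smooth_diff[OF sm mem(3)] mem(1) by metis
    from fibre_zero_deriv[OF this mem(2)]
    have "(Gq has_derivative (\<lambda>_. 0)) (at (snd (snd (\<psi> z))))"
      unfolding Gq_def by simp
    from has_derivative_compose[OF D2 this] show ?thesis unfolding h_def by simp
  qed
  obtain c where c: "\<forall>z\<in>C. h z = c"
    using has_derivative_zero_constant[OF cC hd] by blast
  define T where "T = F \<inter> (W \<inter> \<phi> -` ball (\<phi> a) r)"
  have "open (W \<inter> \<phi> -` ball (\<phi> a) r)"
    by (rule continuous_open_preimage[OF smooth_vec_cont[OF s\<phi>] W(1) open_ball])
  then have oT: "openin (top_of_set F) T" unfolding T_def by (rule openin_open_Int)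
  have \<phi>C: "\<phi> s \<in> C" if "s \<in> T" for s
    using that sl unfolding T_def C_def by blast
  have "G s = c" if "s \<in> T" for s
  proof -
    have "s \<in> W" "s \<in> F" using that T_def by auto
    then have "G s = h (\<phi> s)" unfolding h_def using inv FG by auto
    then show ?thesis using c \<phi>C[OF that] by simp
  qed
  moreover have "a \<in> T" using aF W(2) r(1) T_def by auto
  ultimately show ?thesis using oT unfolding G_def by metis
qed

lemma const_fibre:
  fixes L :: "('n::finite, 'm::finite) pt \<Rightarrow> real"
  assumes sm: "smooth_fun (fdom U) L"
    and Fdef: "F = fdom U \<inter> legendre L -` {(x, y, P)}"
    and sub: "submanifold F" and con: "connected F" and aF: "a \<in> F" and bF: "b \<in> F"
  shows "pairing P (snd (snd a)) - L a = pairing P (snd (snd b)) - L b"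
  by (rule connected_equivalence_relation[OF con aF bF, where R = "\<lambda>a b. pairing P (snd (snd a)) - L a = pairing P (snd (snd b)) - L b"])
     (auto dest: local_const[OF sm Fdef sub])

lemma part2:
  fixes L H :: "('n::finite, 'm::finite) pt \<Rightarrow> real"
  assumes sm: "smooth_fun (fdom U) L" and sr: "semiregular U L" and as: "associated U H L"
    and mem: "(x, y, v) \<in> fdom U"
  shows "pairing (fibre_grad L x y v) v - L (x, y, v) = H (x, y, fibre_grad L x y v)"
proof -
  define P where "P = fibre_grad L x y v"
  define q where "q = (x, y, P)"
  have qL: "q = legendre L (x, y, v)" unfolding q_def P_def legendre_def by simp
  then have qim: "q \<in> legendre L ` fdom U" using mem by blast
  define w where "w = fibre_grad H x y P"
  have "momentum H q = (x, y, w)" unfolding momentum_def q_def w_def by simp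
  then have "legendre L (x, y, w) = q" using as qim unfolding associated_def by metis
  then have wP: "fibre_grad L x y w = P" unfolding legendre_def q_def by simp
  have U: "(x, y) \<in> U" using mem unfolding fdom_def by simp
  then have m2: "(x, y, P) \<in> fdom U" "(x, y, w) \<in> fdom U" unfolding fdom_def by auto
  have Hq: "H q = pairing P w - L (x, y, w)"
    using as m2(1) unfolding associated_def q_def w_def by fastforce
  define F where "F = fdom U \<inter> legendre L -` {(x, y, P)}"
  have cs: "connected F" "submanifold F"
    using sr qim unfolding semiregular_def F_def q_def by auto
  have vF: "(x, y, v) \<in> F" using mem qL unfolding F_def q_def by simp
  have wF: "(x, y, w) \<in> F" using m2(2) wP unfolding F_def legendre_def by simp
  have "pairing P v - L (x, y, v) = pairing P w - L (x, y, w)"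
    using const_fibre[OF sm F_def cs(2) cs(1) vF wF] by simp
  then show ?thesis using Hq unfolding P_def q_def by simp
qed

theorem proposition16p8:
  fixes U :: "((real^'n::finite) \<times> (real^'m::finite)) set"
    and L H H' :: "('n, 'm) pt \<Rightarrow> real"
  assumes "lagrangian U L" and "semiregular U L"
    and "mm_hamiltonian U H" and "associated U H L"
    and "mm_hamiltonian U H'" and "associated U H' L"
  shows "(\<forall>q \<in> legendre L ` fdom U. H q = H' q) \<and>
         (\<forall>(x, y, v) \<in> fdom U.
            pairing (fibre_grad L x y v) v - L (x, y, v) = H (x, y, fibre_grad L x y v))"
proof
  have sm: "smooth_fun (fdom U) L" using assms(1) unfolding lagrangian_def by simp
  show "\<forall>(x, y, v) \<in> fdom U.
            pairing (fibre_grad L x y v) v - L (x, y, v) = H (x, y, fibre_grad L x y v)"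
    using part2[OF sm assms(2) assms(4)] by blast
  show "\<forall>q \<in> legendre L ` fdom U. H q = H' q"
  proof
    fix q assume "q \<in> legendre L ` fdom U"
    then obtain x y v where m: "(x, y, v) \<in> fdom U" and q: "q = legendre L (x, y, v)"
      by (metis prod_cases3 image_iff)
    have "q = (x, y, fibre_grad L x y v)" using q unfolding legendre_def by simp
    then show "H q = H' q"
      using part2[OF sm assms(2) assms(4) m] part2[OF sm assms(2) assms(6) m] by simp
  qed
qed

end
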